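(* Let $M$ be a countable transitive model of $\mathrm{ZFU}_R$, $\mathbb{P}\in M$ a forcing poset, and $f\in M$ a function whose domain is an antichain of $\mathbb{P}$ and whose values lie in $M^{\mathbb{P}}$. Then there is $\dot v\in M^{\mathbb{P}}$ such that $p\Vdash\dot v=f(p)$ for every $p\in dom(f)$.
   Context: $\mathrm{ZFU}_R$ is ZF with urelements (language $\{\in,\mathcal{A}\}$, $\mathcal{A}$ the urelement predicate, Extensionality only for sets) formulated with Replacement rather than Collection, without AC. A $\mathbb{P}$-name is a set $\dot x$ of ordered pairs $\langle y,p\rangle$ with $p\in\mathbb{P}$ and $y$ either a $\mathbb{P}$-name or a urelement, such that whenever $\langle a,p\rangle,\langle y,q\rangle\in\dot x$ with $a$ a urelement and $a\neq y$, $p$ and $q$ are incompatible. $M^{\mathbb{P}}$ is the set of $\mathbb{P}$-names in $M$. For an $M$-generic filter $G$ and $\dot x\in M^{\mathbb{P}}$: $\dot x_G=a$ if $a$ is a urelement with $\langle a,p\rangle\in\dot x$ for some $p\in G$; otherwise $\dot x_G=\{\dot y_G:\langle\dot y,p\rangle\in\dot x,\ \dot y\in M^{\mathbb{P}},\ p\in G\}$. $M[G]=\{\dot x_G:\dot x\in M^{\mathbb{P}}\}$. $p\Vdash\varphi(\dot x_1,\dots,\dot x_n)$ means that for every $M$-generic $G$ with $p\in G$, $M[G]\models\varphi(\dot x_{1G},\dots,\dot x_{nG})$. *)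

theory Defs
  imports Main "HOL-Library.Countable_Set_Type" "HOL-Library.Countable_Set"
begin

text \<open>Every element of a countable transitive model is hereditarily countable, so
the ambient universe is taken to be the type of hereditarily countable,
well-founded, extensional sets over urelements of type 'u.\<close>

datatype 'u V = Ur 'u | Set "'u V cset"

definition mem :: "'u V \<Rightarrow> 'u V \<Rightarrow> bool" where
  "mem x y \<longleftrightarrow> (\<exists>S. y = Set S \<and> x \<in> rcset S)"

definition isUr :: "'u V \<Rightarrow> bool" where
  "isUr x \<longleftrightarrow> (\<exists>a. x = Ur a)"

definition upair :: "'u V \<Rightarrow> 'u V \<Rightarrow> 'u V" where
  "upair a b = Set (cinsert a (csingle b))"

definition opair :: "'u V \<Rightarrow> 'u V \<Rightarrow> 'u V" where
  "opair a b = upair (upair a a) (upair a b)"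

datatype fm = FMem nat nat | FEq nat nat | FUr nat | FNeg fm | FConj fm fm | FEx fm

definition econs :: "'u V \<Rightarrow> (nat \<Rightarrow> 'u V) \<Rightarrow> nat \<Rightarrow> 'u V" where
  "econs x env = case_nat x env"

primrec sat :: "'u V set \<Rightarrow> (nat \<Rightarrow> 'u V) \<Rightarrow> fm \<Rightarrow> bool" where
  "sat M env (FMem i j) = mem (env i) (env j)"
| "sat M env (FEq i j) = (env i = env j)"
| "sat M env (FUr i) = isUr (env i)"
| "sat M env (FNeg \<phi>) = (\<not> sat M env \<phi>)"
| "sat M env (FConj \<phi> \<psi>) = (sat M env \<phi> \<and> sat M env \<psi>)"
| "sat M env (FEx \<phi>) = (\<exists>x\<in>M. sat M (econs x env) \<phi>)"

definition ZFU_R_model :: "'u V set \<Rightarrow> bool" where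
  "ZFU_R_model M \<longleftrightarrow>
     \<comment> \<open>Urelements have no elements\<close>
     (\<forall>a\<in>M. isUr a \<longrightarrow> (\<forall>z\<in>M. \<not> mem z a))
   \<comment> \<open>Extensionality (for sets)\<close>
   \<and> (\<forall>x\<in>M. \<forall>y\<in>M. \<not> isUr x \<and> \<not> isUr y \<and> (\<forall>z\<in>M. mem z x \<longleftrightarrow> mem z y) \<longrightarrow> x = y)
   \<comment> \<open>Foundation\<close>
   \<and> (\<forall>x\<in>M. (\<exists>y\<in>M. mem y x) \<longrightarrow> (\<exists>y\<in>M. mem y x \<and> (\<forall>z\<in>M. mem z x \<longrightarrow> \<not> mem z y)))
   \<comment> \<open>Pairing\<close>
   \<and> (\<forall>x\<in>M. \<forall>y\<in>M. \<exists>z\<in>M. \<not> isUr z \<and> (\<forall>w\<in>M. mem w z \<longleftrightarrow> w = x \<or> w = y))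
   \<comment> \<open>Union\<close>
   \<and> (\<forall>x\<in>M. \<exists>y\<in>M. \<not> isUr y \<and> (\<forall>w\<in>M. mem w y \<longleftrightarrow> (\<exists>z\<in>M. mem z x \<and> mem w z)))
   \<comment> \<open>Powerset\<close>
   \<and> (\<forall>x\<in>M. \<exists>y\<in>M. \<not> isUr y \<and>
        (\<forall>z\<in>M. mem z y \<longleftrightarrow> (\<not> isUr z \<and> (\<forall>w\<in>M. mem w z \<longrightarrow> mem w x))))
   \<comment> \<open>Infinity\<close>
   \<and> (\<exists>y\<in>M. \<not> isUr y \<and>
        (\<exists>e\<in>M. mem e y \<and> \<not> isUr e \<and> (\<forall>z\<in>M. \<not> mem z e)) \<and>
        (\<forall>x\<in>M. mem x y \<longrightarrow> (\<exists>s\<in>M. mem s y \<and> \<not> isUr s \<and>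
                                  (\<forall>z\<in>M. mem z s \<longleftrightarrow> mem z x \<or> z = x))))
   \<comment> \<open>Separation scheme (with parameters env)\<close>
   \<and> (\<forall>\<phi> env. (\<forall>i. env i \<in> M) \<longrightarrow>
        (\<forall>x\<in>M. \<exists>y\<in>M. \<not> isUr y \<and>
           (\<forall>z\<in>M. mem z y \<longleftrightarrow> mem z x \<and> sat M (econs z env) \<phi>)))
   \<comment> \<open>Replacement scheme (with parameters env); u is variable 0, v is variable 1\<close>
   \<and> (\<forall>\<phi> env. (\<forall>i. env i \<in> M) \<longrightarrow>
        (\<forall>x\<in>M. (\<forall>u\<in>M. mem u x \<longrightarrow> (\<exists>!v. v \<in> M \<and> sat M (econs u (econs v env)) \<phi>)) \<longrightarrow>
           (\<exists>y\<in>M. \<not> isUr y \<and>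
              (\<forall>v\<in>M. mem v y \<longleftrightarrow> (\<exists>u\<in>M. mem u x \<and> sat M (econs u (econs v env)) \<phi>)))))"

definition transitive_cls :: "'u V set \<Rightarrow> bool" where
  "transitive_cls M \<longleftrightarrow> (\<forall>y\<in>M. \<forall>x. mem x y \<longrightarrow> x \<in> M)"

definition ctm :: "'u V set \<Rightarrow> bool" where
  "ctm M \<longleftrightarrow> countable M \<and> transitive_cls M \<and> ZFU_R_model M"

definition le :: "'u V \<Rightarrow> 'u V \<Rightarrow> 'u V \<Rightarrow> bool" where
  "le leq p q \<longleftrightarrow> mem (opair p q) leq"

definition forcing_poset :: "'u V \<Rightarrow> 'u V \<Rightarrow> 'u V \<Rightarrow> bool" where
  "forcing_poset P leq one \<longleftrightarrow>
     \<not> isUr P \<and> \<not> isUr leq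
   \<and> (\<forall>z. mem z leq \<longrightarrow> (\<exists>p q. z = opair p q \<and> mem p P \<and> mem q P))
   \<and> (\<forall>p. mem p P \<longrightarrow> le leq p p)
   \<and> (\<forall>p q r. mem p P \<and> mem q P \<and> mem r P \<and> le leq p q \<and> le leq q r \<longrightarrow> le leq p r)
   \<and> (\<forall>p q. mem p P \<and> mem q P \<and> le leq p q \<and> le leq q p \<longrightarrow> p = q)
   \<and> mem one P \<and> (\<forall>p. mem p P \<longrightarrow> le leq p one)"

definition compatible :: "'u V \<Rightarrow> 'u V \<Rightarrow> 'u V \<Rightarrow> 'u V \<Rightarrow> bool" where
  "compatible P leq p q \<longleftrightarrow> (\<exists>r. mem r P \<and> le leq r p \<and> le leq r q)"

definition antichain :: "'u V \<Rightarrow> 'u V \<Rightarrow> 'u V set \<Rightarrow> bool" where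
  "antichain P leq A \<longleftrightarrow> (\<forall>p\<in>A. mem p P) \<and>
     (\<forall>p\<in>A. \<forall>q\<in>A. p \<noteq> q \<longrightarrow> \<not> compatible P leq p q)"

definition dense :: "'u V \<Rightarrow> 'u V \<Rightarrow> 'u V \<Rightarrow> bool" where
  "dense P leq D \<longleftrightarrow> (\<forall>d. mem d D \<longrightarrow> mem d P) \<and>
     (\<forall>p. mem p P \<longrightarrow> (\<exists>d. mem d D \<and> le leq d p))"

definition filter_on :: "'u V \<Rightarrow> 'u V \<Rightarrow> 'u V set \<Rightarrow> bool" where
  "filter_on P leq G \<longleftrightarrow> G \<noteq> {} \<and> (\<forall>p\<in>G. mem p P)
   \<and> (\<forall>p\<in>G. \<forall>q. mem q P \<and> le leq p q \<longrightarrow> q \<in> G)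
   \<and> (\<forall>p\<in>G. \<forall>q\<in>G. \<exists>r\<in>G. le leq r p \<and> le leq r q)"

definition M_generic :: "'u V set \<Rightarrow> 'u V \<Rightarrow> 'u V \<Rightarrow> 'u V set \<Rightarrow> bool" where
  "M_generic M P leq G \<longleftrightarrow> filter_on P leq G \<and>
     (\<forall>D\<in>M. dense P leq D \<longrightarrow> (\<exists>d\<in>G. mem d D))"

inductive is_name :: "'u V \<Rightarrow> 'u V \<Rightarrow> 'u V \<Rightarrow> bool" for P leq where
  "\<lbrakk> \<not> isUr x;
     \<forall>z. mem z x \<longrightarrow> (\<exists>y p. z = opair y p \<and> mem p P \<and> (isUr y \<or> is_name P leq y));
     \<forall>a p y q. mem (opair a p) x \<and> mem (opair y q) x \<and> isUr a \<and> a \<noteq> y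
               \<longrightarrow> \<not> compatible P leq p q \<rbrakk>
   \<Longrightarrow> is_name P leq x"

definition names :: "'u V set \<Rightarrow> 'u V \<Rightarrow> 'u V \<Rightarrow> 'u V set" where
  "names M P leq = {x \<in> M. is_name P leq x}"

definition memrel :: "('u V \<times> 'u V) set" where
  "memrel = {(x, y). mem x y}"

definition val :: "'u V set \<Rightarrow> 'u V \<Rightarrow> 'u V \<Rightarrow> 'u V set \<Rightarrow> 'u V \<Rightarrow> 'u V" where
  "val M P leq G = wfrec (memrel\<^sup>+) (\<lambda>F x.
     if (\<exists>a p. isUr a \<and> p \<in> G \<and> mem (opair a p) x)
     then (THE a. isUr a \<and> (\<exists>p. p \<in> G \<and> mem (opair a p) x))
     else Set (acset {F y | y p. mem (opair y p) x \<and> y \<in> names M P leq \<and> p \<in> G}))"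

definition forces_eq :: "'u V set \<Rightarrow> 'u V \<Rightarrow> 'u V \<Rightarrow> 'u V \<Rightarrow> 'u V \<Rightarrow> 'u V \<Rightarrow> bool" where
  "forces_eq M P leq p x y \<longleftrightarrow>
     (\<forall>G. M_generic M P leq G \<and> p \<in> G \<longrightarrow> val M P leq G x = val M P leq G y)"

definition is_function :: "'u V \<Rightarrow> bool" where
  "is_function f \<longleftrightarrow> \<not> isUr f \<and> (\<forall>z. mem z f \<longrightarrow> (\<exists>a b. z = opair a b))
     \<and> (\<forall>a b c. mem (opair a b) f \<and> mem (opair a c) f \<longrightarrow> b = c)"

definition dom :: "'u V \<Rightarrow> 'u V set" where
  "dom f = {a. \<exists>b. mem (opair a b) f}"

definition app :: "'u V \<Rightarrow> 'u V \<Rightarrow> 'u V" where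
  "app f a = (THE b. mem (opair a b) f)"

end

theory Submission
  imports Defs
begin

lemma mem_Set[simp]: "mem x (Set S) \<longleftrightarrow> x \<in> rcset S" by (simp add: mem_def)
lemma mem_Ur[simp]: "\<not> mem x (Ur a)" by (simp add: mem_def)
lemma isUr_simps[simp]: "isUr (Ur a)" "\<not> isUr (Set S)" by (auto simp: isUr_def)

lemma rcset_upair[simp]: "rcset (cinsert a (csingle b)) = {a, b}"
  by (simp add: cinsert.rep_eq bot_cset.rep_eq)

lemma mem_upair[simp]: "mem x (upair a b) \<longleftrightarrow> x = a \<or> x = b"
  by (simp add: upair_def)

lemma upair_not_Ur[simp]: "\<not> isUr (upair a b)" by (simp add: upair_def)

lemma upair_eq_iff: "upair a b = upair c d \<longleftrightarrow> (a = c \<and> b = d) \<or> (a = d \<and> b = c)"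
proof -
  have "upair a b = upair c d \<longleftrightarrow> {a,b} = {c,d}"
    unfolding upair_def V.inject rcset_inject[symmetric] rcset_upair by (rule refl)
  then show ?thesis by (simp add: doubleton_eq_iff)
qed

lemma opair_inject[simp]: "opair a b = opair c d \<longleftrightarrow> a = c \<and> b = d"
  unfolding opair_def upair_eq_iff by auto

lemma wf_memrel: "wf memrel"
proof (rule wfUNIVI)
  fix P :: "'a V \<Rightarrow> bool" and x
  assume H: "\<forall>x. (\<forall>y. (y, x) \<in> memrel \<longrightarrow> P y) \<longrightarrow> P x"
  show "P x"
    apply (induct x rule: V.induct)
    using H by (auto simp: memrel_def)
qed

lemma wf_memrel_trancl: "wf (memrel\<^sup>+)" using wf_memrel wf_trancl by blast

lemma mem_trancl: "mem y x \<Longrightarrow> (y, x) \<in> memrel\<^sup>+" by (auto simp: memrel_def)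

lemma opair_below: "mem (opair y p) x \<Longrightarrow> (y, x) \<in> memrel\<^sup>+"
proof -
  assume a: "mem (opair y p) x"
  have "(y, upair y y) \<in> memrel" by (simp add: memrel_def)
  moreover have "(upair y y, opair y p) \<in> memrel" by (simp add: memrel_def opair_def)
  moreover have "(opair y p, x) \<in> memrel" using a by (simp add: memrel_def)
  ultimately show ?thesis by (meson trancl.simps trancl_into_trancl r_into_trancl)
qed

lemma val_eq: "val M P leq G x =
     (if (\<exists>a p. isUr a \<and> p \<in> G \<and> mem (opair a p) x)
     then (THE a. isUr a \<and> (\<exists>p. p \<in> G \<and> mem (opair a p) x))
     else Set (acset {val M P leq G y | y p. mem (opair y p) x \<and> y \<in> names M P leq \<and> p \<in> G}))"
proof -
  have "val M P leq G x = (\<lambda>F x.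
     if (\<exists>a p. isUr a \<and> p \<in> G \<and> mem (opair a p) x)
     then (THE a. isUr a \<and> (\<exists>p. p \<in> G \<and> mem (opair a p) x))
     else Set (acset {F y | y p. mem (opair y p) x \<and> y \<in> names M P leq \<and> p \<in> G})) (cut (val M P leq G) (memrel\<^sup>+) x) x"
    unfolding val_def by (rule wfrec[OF wf_memrel_trancl])
  also have "{cut (val M P leq G) (memrel\<^sup>+) x y | y p. mem (opair y p) x \<and> y \<in> names M P leq \<and> p \<in> G}
     = {val M P leq G y | y p. mem (opair y p) x \<and> y \<in> names M P leq \<and> p \<in> G}"
  proof -
    have h: "\<And>y p. mem (opair y p) x \<Longrightarrow> cut (val M P leq G) (memrel\<^sup>+) x y = val M P leq G y"
      by (simp add: cut_apply opair_below)
    show ?thesis using h by fastforce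
  qed
  finally show ?thesis by simp
qed

lemma val_cong:
  assumes "\<And>y. (\<exists>r\<in>G. mem (opair y r) v) \<longleftrightarrow> (\<exists>q\<in>G. mem (opair y q) w)"
  shows "val M P leq G v = val M P leq G w"
proof -
  have e1: "(\<exists>a p. isUr a \<and> p \<in> G \<and> mem (opair a p) v) \<longleftrightarrow> (\<exists>a p. isUr a \<and> p \<in> G \<and> mem (opair a p) w)"
    using assms by blast
  have e2: "(\<lambda>a. isUr a \<and> (\<exists>p. p \<in> G \<and> mem (opair a p) v)) = (\<lambda>a. isUr a \<and> (\<exists>p. p \<in> G \<and> mem (opair a p) w))"
    apply (rule ext) using assms by blast
  have e3: "{val M P leq G y | y p. mem (opair y p) v \<and> y \<in> names M P leq \<and> p \<in> G}
     = {val M P leq G y | y p. mem (opair y p) w \<and> y \<in> names M P leq \<and> p \<in> G}"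
    using assms by blast
  show ?thesis by (subst val_eq, subst (2) val_eq, simp only: e1 e2 e3)
qed


definition FImp where "FImp a b = FNeg (FConj a (FNeg b))"
definition FOr where "FOr a b = FNeg (FConj (FNeg a) (FNeg b))"
definition FIff where "FIff a b = FConj (FImp a b) (FImp b a)"
definition FAll where "FAll a = FNeg (FEx (FNeg a))"

lemma sat_derived[simp]:
  "sat M env (FImp a b) = (sat M env a \<longrightarrow> sat M env b)"
  "sat M env (FOr a b) = (sat M env a \<or> sat M env b)"
  "sat M env (FIff a b) = (sat M env a \<longleftrightarrow> sat M env b)"
  "sat M env (FAll a) = (\<forall>x\<in>M. sat M (econs x env) a)"
  by (auto simp: FImp_def FOr_def FIff_def FAll_def)

lemma econs_simps[simp]:
  "econs x env 0 = x" "econs x env (Suc n) = env n"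
  "econs x env (numeral k) = env (pred_numeral k)"
  by (simp_all add: econs_def)

lemma econs_in: "x \<in> M \<Longrightarrow> \<forall>i. env i \<in> M \<Longrightarrow> \<forall>i. econs x env i \<in> M"
  by (simp add: econs_def split: nat.split)

definition is_up :: "'u V set \<Rightarrow> 'u V \<Rightarrow> 'u V \<Rightarrow> 'u V \<Rightarrow> bool" where
  "is_up M x a b \<longleftrightarrow> \<not> isUr x \<and> (\<forall>w\<in>M. mem w x \<longleftrightarrow> w = a \<or> w = b)"

definition is_op :: "'u V set \<Rightarrow> 'u V \<Rightarrow> 'u V \<Rightarrow> 'u V \<Rightarrow> bool" where
  "is_op M x a b \<longleftrightarrow> (\<exists>v\<in>M. \<exists>u\<in>M. is_up M u a a \<and> is_up M v a b \<and> is_up M x u v)"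

lemma is_up_iff:
  assumes "transitive_cls M" "x \<in> M" "a \<in> M" "b \<in> M"
  shows "is_up M x a b \<longleftrightarrow> x = upair a b"
proof
  assume h: "is_up M x a b"
  then obtain S where S: "x = Set S" by (cases x) (auto simp: is_up_def)
  have "\<forall>w. w \<in> rcset S \<longrightarrow> w \<in> M" using assms(1,2) S by (auto simp: transitive_cls_def)
  then have "rcset S = {a, b}" using h S assms(3,4) by (auto simp: is_up_def)
  then show "x = upair a b" using S by (metis rcset_upair upair_def rcset_inject)
next
  assume "x = upair a b" then show "is_up M x a b" by (simp add: is_up_def)
qed

lemma is_op_iff:
  assumes "transitive_cls M" "x \<in> M" "a \<in> M" "b \<in> M"
  shows "is_op M x a b \<longleftrightarrow> x = opair a b"
proof
  assume "is_op M x a b"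
  then show "x = opair a b" using assms by (auto simp: is_op_def is_up_iff opair_def)
next
  assume x: "x = opair a b"
  have u: "upair a a \<in> M" and v: "upair a b \<in> M"
    using assms(1,2) x by (auto simp: transitive_cls_def opair_def)
  show "is_op M x a b" unfolding is_op_def
    using u v assms x by (auto simp: is_up_iff opair_def)
qed

definition fupair :: "nat \<Rightarrow> nat \<Rightarrow> nat \<Rightarrow> fm" where
  "fupair i j k = FConj (FNeg (FUr i)) (FAll (FIff (FMem 0 (Suc i)) (FOr (FEq 0 (Suc j)) (FEq 0 (Suc k)))))"

lemma sat_fupair[simp]: "sat M env (fupair i j k) = is_up M (env i) (env j) (env k)"
  by (auto simp: fupair_def is_up_def)

definition fopair :: "nat \<Rightarrow> nat \<Rightarrow> nat \<Rightarrow> fm" where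
  "fopair i j k = FEx (FEx (FConj (fupair 1 (j+2) (j+2)) (FConj (fupair 0 (j+2) (k+2)) (fupair (i+2) 1 0))))"

lemma sat_fopair[simp]: "sat M env (fopair i j k) = is_op M (env i) (env j) (env k)"
  by (auto simp: fopair_def is_op_def numeral_2_eq_2)


lemma trans_mem: "transitive_cls M \<Longrightarrow> y \<in> M \<Longrightarrow> mem x y \<Longrightarrow> x \<in> M"
  by (auto simp: transitive_cls_def)

lemma ax_pair: "ctm M \<Longrightarrow> \<forall>x\<in>M. \<forall>y\<in>M. \<exists>z\<in>M. \<not> isUr z \<and> (\<forall>w\<in>M. mem w z \<longleftrightarrow> w = x \<or> w = y)"
  unfolding ctm_def by (drule conjunct2, drule conjunct2, drule ZFU_R_model_def[THEN iffD1]) (elim conjE, assumption)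

lemma ax_union: "ctm M \<Longrightarrow> \<forall>x\<in>M. \<exists>y\<in>M. \<not> isUr y \<and> (\<forall>w\<in>M. mem w y \<longleftrightarrow> (\<exists>z\<in>M. mem z x \<and> mem w z))"
  unfolding ctm_def by (drule conjunct2, drule conjunct2, drule ZFU_R_model_def[THEN iffD1]) (elim conjE, assumption)

lemma ax_pow: "ctm M \<Longrightarrow> \<forall>x\<in>M. \<exists>y\<in>M. \<not> isUr y \<and>
        (\<forall>z\<in>M. mem z y \<longleftrightarrow> (\<not> isUr z \<and> (\<forall>w\<in>M. mem w z \<longrightarrow> mem w x)))"
  unfolding ctm_def by (drule conjunct2, drule conjunct2, drule ZFU_R_model_def[THEN iffD1]) (elim conjE, assumption)

lemma ax_sep: "ctm M \<Longrightarrow> \<forall>\<phi> env. (\<forall>i. env i \<in> M) \<longrightarrow>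
        (\<forall>x\<in>M. \<exists>y\<in>M. \<not> isUr y \<and>
           (\<forall>z\<in>M. mem z y \<longleftrightarrow> mem z x \<and> sat M (econs z env) \<phi>))"
  unfolding ctm_def by (drule conjunct2, drule conjunct2, drule ZFU_R_model_def[THEN iffD1]) (elim conjE, assumption)

lemma M_upair:
  assumes "ctm M" "a \<in> M" "b \<in> M" shows "upair a b \<in> M"
proof -
  have t: "transitive_cls M" using assms by (simp add: ctm_def)
  have "\<forall>x\<in>M. \<forall>y\<in>M. \<exists>z\<in>M. \<not> isUr z \<and> (\<forall>w\<in>M. mem w z \<longleftrightarrow> w = x \<or> w = y)"
    using assms(1) by (rule ax_pair)
  then obtain z where z: "z \<in> M" "is_up M z a b" using assms unfolding is_up_def by blast
  then show ?thesis using is_up_iff[OF t z(1) assms(2,3)] by simp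
qed

lemma M_opair: "ctm M \<Longrightarrow> a \<in> M \<Longrightarrow> b \<in> M \<Longrightarrow> opair a b \<in> M"
  by (simp add: opair_def M_upair)

lemma M_union:
  assumes "ctm M" "x \<in> M" shows "\<exists>y\<in>M. \<forall>w. mem w y \<longleftrightarrow> (\<exists>z. mem z x \<and> mem w z)"
proof -
  have t: "transitive_cls M" using assms by (simp add: ctm_def)
  have "\<forall>x\<in>M. \<exists>y\<in>M. \<not> isUr y \<and> (\<forall>w\<in>M. mem w y \<longleftrightarrow> (\<exists>z\<in>M. mem z x \<and> mem w z))"
    using assms(1) by (rule ax_union)
  then obtain y where y: "y \<in> M" "\<forall>w\<in>M. mem w y \<longleftrightarrow> (\<exists>z\<in>M. mem z x \<and> mem w z)"
    using assms by blast
  show ?thesis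
  proof (intro bexI[OF _ y(1)] allI iffI)
    fix w assume "mem w y" then show "\<exists>z. mem z x \<and> mem w z" using y t trans_mem by blast
  next
    fix w assume "\<exists>z. mem z x \<and> mem w z"
    then obtain z where "mem z x" "mem w z" by blast
    moreover have "z \<in> M" using calculation t assms trans_mem by blast
    moreover have "w \<in> M" using calculation t trans_mem by blast
    ultimately show "mem w y" using y by blast
  qed
qed

lemma M_pow:
  assumes "ctm M" "x \<in> M" shows "\<exists>y\<in>M. \<forall>z\<in>M. mem z y \<longleftrightarrow> (\<not> isUr z \<and> (\<forall>w. mem w z \<longrightarrow> mem w x))"
proof -
  have t: "transitive_cls M" using assms by (simp add: ctm_def)
  have "\<forall>x\<in>M. \<exists>y\<in>M. \<not> isUr y \<and>
        (\<forall>z\<in>M. mem z y \<longleftrightarrow> (\<not> isUr z \<and> (\<forall>w\<in>M. mem w z \<longrightarrow> mem w x)))"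
    using assms(1) by (rule ax_pow)
  then obtain y where y: "y \<in> M" "\<forall>z\<in>M. mem z y \<longleftrightarrow> (\<not> isUr z \<and> (\<forall>w\<in>M. mem w z \<longrightarrow> mem w x))"
    using assms by blast
  show ?thesis
    apply (rule bexI[OF _ y(1)])
    using y(2) t trans_mem by blast
qed

lemma M_sep:
  assumes "ctm M" "\<forall>i. env i \<in> M" "x \<in> M"
  shows "\<exists>y\<in>M. \<not> isUr y \<and> (\<forall>z. mem z y \<longleftrightarrow> mem z x \<and> sat M (econs z env) \<phi>)"
proof -
  have t: "transitive_cls M" using assms by (simp add: ctm_def)
  have "\<forall>\<phi> env. (\<forall>i. env i \<in> M) \<longrightarrow>
        (\<forall>x\<in>M. \<exists>y\<in>M. \<not> isUr y \<and>
           (\<forall>z\<in>M. mem z y \<longleftrightarrow> mem z x \<and> sat M (econs z env) \<phi>))"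
    using assms(1) by (rule ax_sep)
  then obtain y where y: "y \<in> M" "\<not> isUr y" "\<forall>z\<in>M. mem z y \<longleftrightarrow> mem z x \<and> sat M (econs z env) \<phi>"
    using assms by blast
  show ?thesis
    apply (rule bexI[OF _ y(1)])
    using y t trans_mem assms(3) by blast
qed

definition fsep :: fm where
  "fsep = FEx (FEx (FEx (FEx (FEx (
     FConj (fopair 5 2 0)
    (FConj (FEx (FConj (fopair 0 5 4) (FMem 0 7)))
    (FConj (FEx (FConj (fopair 0 3 2) (FMem 0 4)))
    (FConj (FMem 0 7)
    (FConj (FEx (FConj (fopair 0 1 5) (FMem 0 9)))
           (FEx (FConj (fopair 0 1 2) (FMem 0 9))))))))))))"

lemma ex_op: "transitive_cls M \<Longrightarrow> a \<in> M \<Longrightarrow> b \<in> M \<Longrightarrow> c \<in> M \<Longrightarrow>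
   (\<exists>w\<in>M. is_op M w a b \<and> mem w c) \<longleftrightarrow> mem (opair a b) c"
proof
  assume "transitive_cls M" "a \<in> M" "b \<in> M" "c \<in> M" "\<exists>w\<in>M. is_op M w a b \<and> mem w c"
  then show "mem (opair a b) c" using is_op_iff by blast
next
  assume h: "transitive_cls M" "a \<in> M" "b \<in> M" "c \<in> M" "mem (opair a b) c"
  then have "opair a b \<in> M" using trans_mem by blast
  then show "\<exists>w\<in>M. is_op M w a b \<and> mem w c" using h is_op_iff by blast
qed

lemma in_mem_simp: "transitive_cls M \<Longrightarrow> c \<in> M \<Longrightarrow> (x \<in> M \<and> mem x c) = mem x c"
  using trans_mem by blast

lemma sat_fsep:
  assumes t: "transitive_cls M" and e: "\<forall>i. env i \<in> M" and z: "z \<in> M"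
  shows "sat M (econs z env) fsep \<longleftrightarrow>
    (\<exists>p\<in>M. \<exists>fp\<in>M. \<exists>y\<in>M. \<exists>q\<in>M. \<exists>r\<in>M. z = opair y r \<and> mem (opair p fp) (env 0)
       \<and> mem (opair y q) fp \<and> mem r (env 1) \<and> mem (opair r p) (env 2) \<and> mem (opair r q) (env 2))"
  unfolding fsep_def using t e z by (simp add: ex_op is_op_iff in_mem_simp cong: bex_cong conj_cong)


lemma app_mem:
  assumes "is_function f" "p \<in> dom f" shows "mem (opair p (app f p)) f"
proof -
  obtain b where b: "mem (opair p b) f" using assms(2) by (auto simp: dom_def)
  have "app f p = b" unfolding app_def
    by (rule the_equality[where P="\<lambda>b. mem (opair p b) f", OF b]) (use assms(1) b in \<open>auto simp: is_function_def\<close>)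
  then show ?thesis using b by simp
qed

lemma mem_f_app:
  assumes "is_function f" "mem (opair p b) f" shows "p \<in> dom f \<and> b = app f p"
proof -
  have d: "p \<in> dom f" using assms(2) by (auto simp: dom_def)
  then have "mem (opair p (app f p)) f" using app_mem assms(1) by blast
  then show ?thesis using d assms by (auto simp: is_function_def)
qed

lemma name_props:
  assumes "is_name P leq x"
  shows "\<not> isUr x"
    "\<And>z. mem z x \<Longrightarrow> (\<exists>y p. z = opair y p \<and> mem p P \<and> (isUr y \<or> is_name P leq y))"
    "\<And>a p y q. mem (opair a p) x \<Longrightarrow> mem (opair y q) x \<Longrightarrow> isUr a \<Longrightarrow> a \<noteq> y
               \<Longrightarrow> \<not> compatible P leq p q"
  using assms by (cases rule: is_name.cases, blast)+

lemma name_pair: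
  assumes "is_name P leq x" "mem (opair y q) x"
  shows "mem q P \<and> (isUr y \<or> is_name P leq y)"
  using name_props(2)[OF assms(1) assms(2)] by auto

theorem mainTheorem13:
  fixes M :: "'u V set" and P leq one f :: "'u V"
  assumes "ctm M"
    and "P \<in> M" and "leq \<in> M" and "one \<in> M" and "forcing_poset P leq one"
    and "f \<in> M" and "is_function f"
    and "antichain P leq (dom f)"
    and "\<forall>p\<in>dom f. app f p \<in> names M P leq"
  shows "\<exists>v\<in>names M P leq. \<forall>p\<in>dom f. forces_eq M P leq p v (app f p)"
proof -
  have t: "transitive_cls M" using assms(1) by (simp add: ctm_def)
  note tm = trans_mem[OF t]
  have fn: "\<And>p. p \<in> dom f \<Longrightarrow> is_name P leq (app f p)" "\<And>p. p \<in> dom f \<Longrightarrow> app f p \<in> M"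
    using assms(9) by (auto simp: names_def)
  have domP: "\<And>p. p \<in> dom f \<Longrightarrow> mem p P" using assms(8) by (simp add: antichain_def)
  have anti: "\<And>p p'. p \<in> dom f \<Longrightarrow> p' \<in> dom f \<Longrightarrow> compatible P leq p p' \<Longrightarrow> p = p'"
    using assms(8) by (auto simp: antichain_def)
  have letr: "\<And>a b c. mem a P \<Longrightarrow> mem b P \<Longrightarrow> mem c P \<Longrightarrow> le leq a b \<Longrightarrow> le leq b c \<Longrightarrow> le leq a c"
    using assms(5) unfolding forcing_poset_def by blast
  obtain u1 where u1: "u1 \<in> M" "\<forall>w. mem w u1 \<longleftrightarrow> (\<exists>z. mem z f \<and> mem w z)" using M_union[OF assms(1) assms(6)] by blast
  obtain u2 where u2: "u2 \<in> M" "\<forall>w. mem w u2 \<longleftrightarrow> (\<exists>z. mem z u1 \<and> mem w z)" using M_union[OF assms(1) u1(1)] by blast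
  obtain u3 where u3: "u3 \<in> M" "\<forall>w. mem w u3 \<longleftrightarrow> (\<exists>z. mem z u2 \<and> mem w z)" using M_union[OF assms(1) u2(1)] by blast
  obtain u4 where u4: "u4 \<in> M" "\<forall>w. mem w u4 \<longleftrightarrow> (\<exists>z. mem z u3 \<and> mem w z)" using M_union[OF assms(1) u3(1)] by blast
  obtain u5 where u5: "u5 \<in> M" "\<forall>w. mem w u5 \<longleftrightarrow> (\<exists>z. mem z u4 \<and> mem w z)" using M_union[OF assms(1) u4(1)] by blast
  have inu5: "mem y u5" if "p \<in> dom f" "mem (opair y q) (app f p)" for p y q
  proof -
    have "mem (opair p (app f p)) f" using app_mem[OF assms(7) that(1)] .
    then have "mem (upair p (app f p)) u1" using u1 by (auto simp: opair_def)
    then have "mem (app f p) u2" using u2 by auto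
    then have "mem (opair y q) u3" using u3 that(2) by auto
    then have "mem (upair y y) u4" using u4 by (auto simp: opair_def)
    then show ?thesis using u5 by auto
  qed
  obtain W where W: "W \<in> M" "\<forall>w. mem w W \<longleftrightarrow> mem w u5 \<or> mem w P"
  proof -
    have "upair u5 P \<in> M" using M_upair[OF assms(1) u5(1) assms(2)] .
    from M_union[OF assms(1) this] obtain W where "W \<in> M" "\<forall>w. mem w W \<longleftrightarrow> (\<exists>z. mem z (upair u5 P) \<and> mem w z)" by blast
    moreover have "\<forall>w. mem w W \<longleftrightarrow> mem w u5 \<or> mem w P" using calculation(2) by auto
    ultimately show ?thesis using that by blast
  qed
  obtain PW where PW: "PW \<in> M" "\<forall>z\<in>M. mem z PW \<longleftrightarrow> (\<not> isUr z \<and> (\<forall>w. mem w z \<longrightarrow> mem w W))"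
    using M_pow[OF assms(1) W(1)] by blast
  obtain X where X: "X \<in> M" "\<forall>z\<in>M. mem z X \<longleftrightarrow> (\<not> isUr z \<and> (\<forall>w. mem w z \<longrightarrow> mem w PW))"
    using M_pow[OF assms(1) PW(1)] by blast
  have inX: "opair y r \<in> M \<and> mem (opair y r) X" if "y \<in> M" "r \<in> M" "mem y u5" "mem r P" for y r
  proof -
    have a: "upair y y \<in> M" "upair y r \<in> M" using M_upair[OF assms(1)] that by auto
    have "mem (upair y y) PW" "mem (upair y r) PW" using PW a W that by auto
    moreover have "opair y r \<in> M" using M_opair[OF assms(1) that(1,2)] .
    ultimately show ?thesis using X by (auto simp: opair_def)
  qed
  define env :: "nat \<Rightarrow> 'u V" where "env = (\<lambda>i. case i of 0 \<Rightarrow> f | Suc 0 \<Rightarrow> P | _ \<Rightarrow> leq)"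
  have env: "\<forall>i. env i \<in> M" using assms(2,3,6) by (auto simp: env_def split: nat.split)
  have env012: "env 0 = f" "env 1 = P" "env 2 = leq" by (simp_all add: env_def numeral_2_eq_2)
  obtain v where v: "v \<in> M" "\<not> isUr v" "\<forall>z. mem z v \<longleftrightarrow> mem z X \<and> sat M (econs z env) fsep"
    using M_sep[OF assms(1) env X(1)] by blast
  have A: "mem z v \<longleftrightarrow> (\<exists>p y q r. z = opair y r \<and> p \<in> dom f \<and> mem (opair y q) (app f p)
      \<and> mem r P \<and> le leq r p \<and> le leq r q)" for z
  proof
    assume h: "mem z v"
    then have zM: "z \<in> M" using tm v(1) by blast
    have "sat M (econs z env) fsep" using h v(3) by blast
    then obtain p fp y q r where "z = opair y r" "mem (opair p fp) f" "mem (opair y q) fp" "mem r P"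
      "le leq r p" "le leq r q"
      unfolding sat_fsep[OF t env zM] env012 le_def by blast
    moreover have "p \<in> dom f \<and> fp = app f p" using mem_f_app[OF assms(7) calculation(2)] .
    ultimately show "\<exists>p y q r. z = opair y r \<and> p \<in> dom f \<and> mem (opair y q) (app f p)
      \<and> mem r P \<and> le leq r p \<and> le leq r q" by blast
  next
    assume "\<exists>p y q r. z = opair y r \<and> p \<in> dom f \<and> mem (opair y q) (app f p)
      \<and> mem r P \<and> le leq r p \<and> le leq r q"
    then obtain p y q r where h: "z = opair y r" "p \<in> dom f" "mem (opair y q) (app f p)"
      "mem r P" "le leq r p" "le leq r q" by blast
    have fpM: "app f p \<in> M" using fn(2) h(2) .
    have pfM: "opair p (app f p) \<in> M" using tm[OF assms(6) app_mem[OF assms(7) h(2)]] .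
    have "upair p p \<in> M" using tm[OF pfM] by (simp add: opair_def)
    then have pM: "p \<in> M" using tm by simp
    have yqM: "opair y q \<in> M" using tm[OF fpM h(3)] .
    have yM: "y \<in> M" and qM: "q \<in> M"
    proof -
      have "upair y y \<in> M" "upair y q \<in> M" using tm[OF yqM] by (auto simp: opair_def)
      then show "y \<in> M" "q \<in> M" using tm by auto
    qed
    have rM: "r \<in> M" using tm[OF assms(2) h(4)] .
    have x: "z \<in> M" "mem z X" using inX[OF yM rM inu5[OF h(2) h(3)] h(4)] h(1) by auto
    have "sat M (econs z env) fsep"
      unfolding sat_fsep[OF t env x(1)] env012
      using pM fpM yM qM rM h app_mem[OF assms(7) h(2)] unfolding le_def by blast
    then show "mem z v" using v(3) x by blast
  qed
  have vname: "is_name P leq v"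
  proof (rule is_name.intros)
    show "\<not> isUr v" by (rule v(2))
  next
    show "\<forall>z. mem z v \<longrightarrow> (\<exists>y p. z = opair y p \<and> mem p P \<and> (isUr y \<or> is_name P leq y))"
    proof (intro allI impI)
      fix z assume "mem z v"
      then obtain p y q r where h: "z = opair y r" "p \<in> dom f" "mem (opair y q) (app f p)" "mem r P"
        using A by blast
      show "\<exists>y p. z = opair y p \<and> mem p P \<and> (isUr y \<or> is_name P leq y)"
        using h name_pair[OF fn(1)[OF h(2)] h(3)] by blast
    qed
  next
    show "\<forall>a r y r'. mem (opair a r) v \<and> mem (opair y r') v \<and> isUr a \<and> a \<noteq> y
               \<longrightarrow> \<not> compatible P leq r r'"
    proof (intro allI impI notI)
      fix a r y r'
      assume h: "mem (opair a r) v \<and> mem (opair y r') v \<and> isUr a \<and> a \<noteq> y" and c: "compatible P leq r r'"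
      obtain p1 q1 where h1: "p1 \<in> dom f" "mem (opair a q1) (app f p1)" "mem r P" "le leq r p1" "le leq r q1"
        using h A[of "opair a r"] by auto
      obtain p2 q2 where h2: "p2 \<in> dom f" "mem (opair y q2) (app f p2)" "mem r' P" "le leq r' p2" "le leq r' q2"
        using h A[of "opair y r'"] by auto
      obtain s where s: "mem s P" "le leq s r" "le leq s r'" using c by (auto simp: compatible_def)
      have P1: "mem p1 P" "mem p2 P" using domP h1(1) h2(1) by auto
      have Q: "mem q1 P" "mem q2 P" using name_pair[OF fn(1)[OF h1(1)] h1(2)] name_pair[OF fn(1)[OF h2(1)] h2(2)] by auto
      have sp1: "le leq s p1" using letr[OF s(1) h1(3) P1(1) s(2) h1(4)] .
      have sp2: "le leq s p2" using letr[OF s(1) h2(3) P1(2) s(3) h2(4)] .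
      have "compatible P leq p1 p2" using s(1) sp1 sp2 by (auto simp: compatible_def)
      then have e: "p1 = p2" using anti h1(1) h2(1) by blast
      have sq1: "le leq s q1" using letr[OF s(1) h1(3) Q(1) s(2) h1(5)] .
      have sq2: "le leq s q2" using letr[OF s(1) h2(3) Q(2) s(3) h2(5)] .
      have "compatible P leq q1 q2" using s(1) sq1 sq2 by (auto simp: compatible_def)
      moreover have "\<not> compatible P leq q1 q2"
      proof -
        have m2: "mem (opair y q2) (app f p1)" using h2(2) e by simp
        show ?thesis using name_props(3)[OF fn(1)[OF h1(1)] h1(2) m2] h by blast
      qed
      ultimately show False by blast
    qed
  qed
  have "v \<in> names M P leq" using v(1) vname by (simp add: names_def)
  moreover have "\<forall>p\<in>dom f. forces_eq M P leq p v (app f p)"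
  proof (intro ballI, unfold forces_eq_def, intro allI impI)
    fix p G assume p: "p \<in> dom f" and G: "M_generic M P leq G \<and> p \<in> G"
    have F: "filter_on P leq G" using G by (simp add: M_generic_def)
    have GP: "\<And>x. x \<in> G \<Longrightarrow> mem x P" using F unfolding filter_on_def by blast
    have Gup: "\<And>x y. x \<in> G \<Longrightarrow> mem y P \<Longrightarrow> le leq x y \<Longrightarrow> y \<in> G" using F unfolding filter_on_def by blast
    have Gdir: "\<And>x y. x \<in> G \<Longrightarrow> y \<in> G \<Longrightarrow> \<exists>r\<in>G. le leq r x \<and> le leq r y" using F unfolding filter_on_def by blast
    show "val M P leq G v = val M P leq G (app f p)"
    proof (rule val_cong)
      fix y
      show "(\<exists>r\<in>G. mem (opair y r) v) \<longleftrightarrow> (\<exists>q\<in>G. mem (opair y q) (app f p))"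
      proof
        assume "\<exists>r\<in>G. mem (opair y r) v"
        then obtain r where r: "r \<in> G" "mem (opair y r) v" by blast
        then obtain p' q where h: "p' \<in> dom f" "mem (opair y q) (app f p')" "le leq r p'" "le leq r q"
          using A[of "opair y r"] by auto
        have "p' \<in> G" using Gup r(1) domP[OF h(1)] h(3) by blast
        moreover have qP: "mem q P" using name_pair[OF fn(1)[OF h(1)] h(2)] by blast
        then have "q \<in> G" using Gup r(1) h(4) by blast
        moreover obtain s where "s \<in> G" "le leq s p" "le leq s p'" using Gdir G \<open>p' \<in> G\<close> by blast
        then have "compatible P leq p p'" using GP by (auto simp: compatible_def)
        then have "p = p'" using anti p h(1) by blast
        ultimately show "\<exists>q\<in>G. mem (opair y q) (app f p)" using h(2) by blast
      next
        assume "\<exists>q\<in>G. mem (opair y q) (app f p)"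
        then obtain q where q: "q \<in> G" "mem (opair y q) (app f p)" by blast
        obtain s where s: "s \<in> G" "le leq s p" "le leq s q" using Gdir G q(1) by blast
        have "mem (opair y s) v" unfolding A[of "opair y s"] using p q(2) s GP[OF s(1)] by blast
        then show "\<exists>r\<in>G. mem (opair y r) v" using s(1) by blast
      qed
    qed
  qed
  ultimately show ?thesis by blast
qed

end
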